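(* Let $G$ be a $3$-colorable well-bicovered graph in which every vertex lies in a triangle. Then in every proper $3$-coloring of $G$, each color class $V_i$ has size $b(G)/2$. Further, if every edge of $G$ lies in a triangle, then for each color class $V_i$ of a proper $3$-coloring, the subgraph $G-V_i$ is well-covered.
   Context: All graphs are finite and simple; "subgraph" means induced subgraph. $b(G)$ denotes the maximum order of an induced bipartite subgraph of $G$. A graph is well-bicovered if every vertex-inclusion-maximal induced bipartite subgraph has the same order. A graph is well-covered if every maximal independent set has the same cardinality. *)

theory Defs
  imports Main
begin

text \<open>A finite simple graph: finite vertex set V, symmetric irreflexive adjacency E
  whose edges lie within V.  Induced subgraphs are given by vertex subsets S of V.\<close>

definition simple_graph :: "'a set \<Rightarrow> ('a \<Rightarrow> 'a \<Rightarrow> bool) \<Rightarrow> bool" where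
  "simple_graph V E \<longleftrightarrow> finite V \<and> (\<forall>u v. E u v \<longrightarrow> E v u) \<and> (\<forall>v. \<not> E v v)
     \<and> (\<forall>u v. E u v \<longrightarrow> u \<in> V \<and> v \<in> V)"

definition independent :: "('a \<Rightarrow> 'a \<Rightarrow> bool) \<Rightarrow> 'a set \<Rightarrow> bool" where
  "independent E S \<longleftrightarrow> (\<forall>u\<in>S. \<forall>v\<in>S. \<not> E u v)"

definition bipartite_set :: "('a \<Rightarrow> 'a \<Rightarrow> bool) \<Rightarrow> 'a set \<Rightarrow> bool" where
  "bipartite_set E S \<longleftrightarrow> (\<exists>A B. A \<union> B = S \<and> A \<inter> B = {} \<and> independent E A \<and> independent E B)"

definition b :: "'a set \<Rightarrow> ('a \<Rightarrow> 'a \<Rightarrow> bool) \<Rightarrow> nat" where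
  "b V E = Max (card ` {S. S \<subseteq> V \<and> bipartite_set E S})"

definition maximal_bipartite_set :: "'a set \<Rightarrow> ('a \<Rightarrow> 'a \<Rightarrow> bool) \<Rightarrow> 'a set \<Rightarrow> bool" where
  "maximal_bipartite_set V E S \<longleftrightarrow> S \<subseteq> V \<and> bipartite_set E S \<and>
     (\<forall>T. S \<subset> T \<and> T \<subseteq> V \<longrightarrow> \<not> bipartite_set E T)"

definition well_bicovered :: "'a set \<Rightarrow> ('a \<Rightarrow> 'a \<Rightarrow> bool) \<Rightarrow> bool" where
  "well_bicovered V E \<longleftrightarrow> (\<forall>S T. maximal_bipartite_set V E S \<and> maximal_bipartite_set V E T
     \<longrightarrow> card S = card T)"

definition maximal_independent_set :: "'a set \<Rightarrow> ('a \<Rightarrow> 'a \<Rightarrow> bool) \<Rightarrow> 'a set \<Rightarrow> bool" where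
  "maximal_independent_set V E S \<longleftrightarrow> S \<subseteq> V \<and> independent E S \<and>
     (\<forall>T. S \<subset> T \<and> T \<subseteq> V \<longrightarrow> \<not> independent E T)"

definition well_covered :: "'a set \<Rightarrow> ('a \<Rightarrow> 'a \<Rightarrow> bool) \<Rightarrow> bool" where
  "well_covered V E \<longleftrightarrow> (\<forall>S T. maximal_independent_set V E S \<and> maximal_independent_set V E T
     \<longrightarrow> card S = card T)"

definition proper_coloring :: "'a set \<Rightarrow> ('a \<Rightarrow> 'a \<Rightarrow> bool) \<Rightarrow> nat \<Rightarrow> ('a \<Rightarrow> nat) \<Rightarrow> bool" where
  "proper_coloring V E k c \<longleftrightarrow> (\<forall>v\<in>V. c v < k) \<and> (\<forall>u\<in>V. \<forall>v\<in>V. E u v \<longrightarrow> c u \<noteq> c v)"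

definition colorable :: "'a set \<Rightarrow> ('a \<Rightarrow> 'a \<Rightarrow> bool) \<Rightarrow> nat \<Rightarrow> bool" where
  "colorable V E k \<longleftrightarrow> (\<exists>c. proper_coloring V E k c)"

definition color_class :: "'a set \<Rightarrow> ('a \<Rightarrow> nat) \<Rightarrow> nat \<Rightarrow> 'a set" where
  "color_class V c i = {v \<in> V. c v = i}"

definition vertex_in_triangle :: "'a set \<Rightarrow> ('a \<Rightarrow> 'a \<Rightarrow> bool) \<Rightarrow> 'a \<Rightarrow> bool" where
  "vertex_in_triangle V E v \<longleftrightarrow> (\<exists>u\<in>V. \<exists>w\<in>V. E v u \<and> E v w \<and> E u w)"

definition edge_in_triangle :: "'a set \<Rightarrow> ('a \<Rightarrow> 'a \<Rightarrow> bool) \<Rightarrow> 'a \<Rightarrow> 'a \<Rightarrow> bool" where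
  "edge_in_triangle V E u v \<longleftrightarrow> (\<exists>w\<in>V. E u w \<and> E v w)"

end

theory Submission
  imports Defs
begin

lemma tri_not_bip:
  assumes "E x y" "E y z" "E x z" "x \<in> S" "y \<in> S" "z \<in> S"
  shows "\<not> bipartite_set E S"
  using assms unfolding bipartite_set_def independent_def by blast

lemma b_maximal:
  assumes "simple_graph V E"
  shows "\<exists>S. maximal_bipartite_set V E S \<and> card S = b V E"
proof -
  have fin: "finite V" using assms simple_graph_def by auto
  let ?F = "{S. S \<subseteq> V \<and> bipartite_set E S}"
  have "finite ?F" using fin by (simp add: finite_subset[of _ "Pow V"] subset_eq)
  moreover have "{} \<in> ?F" unfolding bipartite_set_def independent_def by auto
  ultimately have "b V E \<in> card ` ?F" unfolding b_def by (intro Max_in) auto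
  then obtain S where S: "S \<subseteq> V" "bipartite_set E S" "card S = b V E" by auto
  have "\<not> bipartite_set E T" if "S \<subset> T" "T \<subseteq> V" for T
  proof
    assume bt: "bipartite_set E T"
    have "finite T" using that fin finite_subset by auto
    hence "card S < card T" using that psubset_card_mono by auto
    moreover have "card T \<le> b V E" unfolding b_def
      using bt that \<open>finite ?F\<close> by (intro Max_ge) auto
    ultimately show False using S by simp
  qed
  thus ?thesis using S unfolding maximal_bipartite_set_def by auto
qed

lemma wb_card:
  assumes "simple_graph V E" "well_bicovered V E" "maximal_bipartite_set V E S"
  shows "card S = b V E"
  using b_maximal[OF assms(1)] assms(2,3) unfolding well_bicovered_def by metis

lemma comp_maximal:
  assumes sg: "simple_graph V E" and pc: "proper_coloring V E 3 c" and l: "l < (3::nat)"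
    and tri: "\<forall>v\<in>V. vertex_in_triangle V E v"
  shows "maximal_bipartite_set V E (V - color_class V c l)"
proof -
  obtain j where j: "j < (3::nat)" "j \<noteq> l" using l by (metis less_numeral_extra(1) numeral_less_iff one_less_numeral_iff semiring_norm(77) zero_neq_one less_trans)
  have bip: "bipartite_set E (V - color_class V c l)"
    unfolding bipartite_set_def
  proof (intro exI conjI)
    show "{v\<in>V. c v = j} \<union> {v\<in>V. c v \<noteq> j \<and> c v \<noteq> l} = V - color_class V c l"
      using j unfolding color_class_def by auto
    show "{v\<in>V. c v = j} \<inter> {v\<in>V. c v \<noteq> j \<and> c v \<noteq> l} = {}" by auto
    show "independent E {v\<in>V. c v = j}"
      using pc unfolding independent_def proper_coloring_def by (metis (mono_tags, lifting) mem_Collect_eq)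
    show "independent E {v\<in>V. c v \<noteq> j \<and> c v \<noteq> l}"
      unfolding independent_def
    proof (intro ballI notI)
      fix u v assume u: "u \<in> {v\<in>V. c v \<noteq> j \<and> c v \<noteq> l}" and v: "v \<in> {v\<in>V. c v \<noteq> j \<and> c v \<noteq> l}"
        and e: "E u v"
      have "c u < 3" "c v < 3" using u v pc unfolding proper_coloring_def by auto
      hence "c u = c v" using u v j l by auto
      thus False using pc u v e unfolding proper_coloring_def by auto
    qed
  qed
  have "\<not> bipartite_set E T" if T: "V - color_class V c l \<subset> T" "T \<subseteq> V" for T
  proof -
    obtain v where v: "v \<in> T" "v \<notin> V - color_class V c l" using T by auto
    hence vV: "v \<in> V" and cv: "c v = l" using T unfolding color_class_def by auto
    obtain u w where uw: "u \<in> V" "w \<in> V" "E v u" "E v w" "E u w"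
      using tri vV unfolding vertex_in_triangle_def by auto
    have "c u \<noteq> l" "c w \<noteq> l" using pc uw vV cv unfolding proper_coloring_def by metis+
    hence "u \<in> T" "w \<in> T" using T uw unfolding color_class_def by auto
    thus ?thesis using tri_not_bip[OF uw(3,5,4)] v by auto
  qed
  thus ?thesis using bip unfolding maximal_bipartite_set_def by auto
qed

lemma ind_maximal:
  assumes sg: "simple_graph V E" and pc: "proper_coloring V E 3 c" and l: "l < (3::nat)"
    and et: "\<forall>u\<in>V. \<forall>v\<in>V. E u v \<longrightarrow> edge_in_triangle V E u v"
    and I: "maximal_independent_set (V - color_class V c l) E I"
  shows "maximal_bipartite_set V E (I \<union> color_class V c l)"
proof -
  have IV: "I \<subseteq> V - color_class V c l" and Ii: "independent E I"
    using I unfolding maximal_independent_set_def by auto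
  have bip: "bipartite_set E (I \<union> color_class V c l)"
    unfolding bipartite_set_def
  proof (intro exI conjI)
    show "I \<union> color_class V c l = I \<union> color_class V c l" by simp
    show "I \<inter> color_class V c l = {}" using IV by auto
    show "independent E I" by fact
    show "independent E (color_class V c l)"
      using pc unfolding independent_def proper_coloring_def color_class_def by (metis (mono_tags, lifting) mem_Collect_eq)
  qed
  have "\<not> bipartite_set E T" if T: "I \<union> color_class V c l \<subset> T" "T \<subseteq> V" for T
  proof -
    obtain v where v: "v \<in> T" "v \<notin> I \<union> color_class V c l" using T by auto
    hence vV: "v \<in> V" and cv: "c v \<noteq> l" and vI: "v \<notin> I"
      using T unfolding color_class_def by auto
    have "I \<subset> insert v I" "insert v I \<subseteq> V - color_class V c l"
      using vI IV vV cv unfolding color_class_def by auto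
    hence "\<not> independent E (insert v I)" using I unfolding maximal_independent_set_def by blast
    then obtain u where uI: "u \<in> I" and e: "E u v"
      using Ii sg unfolding independent_def simple_graph_def by blast
    have uV: "u \<in> V" and cu: "c u \<noteq> l" using uI IV unfolding color_class_def by auto
    obtain w where w: "w \<in> V" "E u w" "E v w"
      using et uV vV e unfolding edge_in_triangle_def by auto
    have "c w \<noteq> c u" "c w \<noteq> c v" "c u \<noteq> c v"
      using pc w uV vV e unfolding proper_coloring_def by metis+
    moreover have "c u < 3" "c v < 3" "c w < 3" using pc w uV vV unfolding proper_coloring_def by auto
    ultimately have "c w = l" using cu cv l by auto
    hence "w \<in> T" using w T unfolding color_class_def by auto
    moreover have "u \<in> T" using uI T by auto
    ultimately show ?thesis using tri_not_bip[OF e w(3) w(2)] v by auto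
  qed
  thus ?thesis using bip IV unfolding maximal_bipartite_set_def color_class_def by auto
qed

theorem mainTheorem15:
  fixes V :: "'a set" and E :: "'a \<Rightarrow> 'a \<Rightarrow> bool"
  assumes "simple_graph V E"
    and "colorable V E 3"
    and "well_bicovered V E"
    and "\<forall>v\<in>V. vertex_in_triangle V E v"
  shows "(\<forall>c i. proper_coloring V E 3 c \<and> i < 3 \<longrightarrow> 2 * card (color_class V c i) = b V E)
     \<and> ((\<forall>u\<in>V. \<forall>v\<in>V. E u v \<longrightarrow> edge_in_triangle V E u v) \<longrightarrow>
         (\<forall>c i. proper_coloring V E 3 c \<and> i < 3 \<longrightarrow> well_covered (V - color_class V c i) E))"
proof -
  have fin: "finite V" using assms(1) simple_graph_def by auto
  have cV: "card V = card (color_class V c l) + b V E"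
    if pc: "proper_coloring V E 3 c" and l: "l < 3" for c l
  proof -
    have "card (V - color_class V c l) = b V E"
      using wb_card[OF assms(1,3) comp_maximal[OF assms(1) pc l assms(4)]] .
    moreover have "card (V - color_class V c l) = card V - card (color_class V c l)"
      by (rule card_Diff_subset) (auto simp: color_class_def intro: finite_subset[OF _ fin])
    moreover have "card (color_class V c l) \<le> card V"
      by (rule card_mono[OF fin]) (auto simp: color_class_def)
    ultimately show ?thesis by simp
  qed
  have P1: "2 * card (color_class V c i) = b V E"
    if pc: "proper_coloring V E 3 c" and i: "i < 3" for c i
  proof -
    have V: "V = color_class V c 0 \<union> color_class V c 1 \<union> color_class V c 2"
      using pc unfolding proper_coloring_def color_class_def by auto
    have f: "finite (color_class V c k)" for k
      using fin by (auto simp: color_class_def)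
    have "card V = card (color_class V c 0) + card (color_class V c 1) + card (color_class V c 2)"
      apply (subst V)
      apply (subst card_Un_disjoint)
        apply (simp_all add: f)
       apply (auto simp: color_class_def)[1]
      apply (subst card_Un_disjoint)
        apply (simp_all add: f)
       apply (auto simp: color_class_def)
      done
    moreover have "card V = card (color_class V c 0) + b V E" using cV pc by auto
    moreover have "card V = card (color_class V c 1) + b V E" using cV pc by auto
    moreover have "card V = card (color_class V c 2) + b V E" using cV pc by auto
    moreover have "i = 0 \<or> i = 1 \<or> i = 2" using i by auto
    ultimately show ?thesis by auto
  qed
  have P2: "well_covered (V - color_class V c i) E"
    if et: "\<forall>u\<in>V. \<forall>v\<in>V. E u v \<longrightarrow> edge_in_triangle V E u v"
      and pc: "proper_coloring V E 3 c" and i: "i < 3" for c i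
  proof -
    have "card I + card (color_class V c i) = b V E"
      if I: "maximal_independent_set (V - color_class V c i) E I" for I
    proof -
      have "card (I \<union> color_class V c i) = b V E"
        using wb_card[OF assms(1,3) ind_maximal[OF assms(1) pc i et I]] .
      moreover have "I \<subseteq> V - color_class V c i" using I unfolding maximal_independent_set_def by blast
      moreover hence "finite I" using fin finite_subset by blast
      moreover have "finite (color_class V c i)" using fin by (auto simp: color_class_def)
      ultimately show ?thesis by (subst (asm) card_Un_disjoint) auto
    qed
    thus ?thesis unfolding well_covered_def by (metis add_right_cancel)
  qed
  show ?thesis using P1 P2 by blast
qed

end
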